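(* Let $\lambda$ be a composition of $n$ and $a<b$ two peaks of $\lambda$. Then $$\mathbb{P}_\lambda(1\in\lambda_{>a,<b})\le2\,\frac{b-a}{n}.$$
   Context: A composition $\lambda$ of $n$ is encoded by its descent set $D_\lambda\subset[1,n-1]$; a cell $i\in[1,n]$ is a peak if $i\in D_\lambda\cup\{n\}$ and $i-1\notin D_\lambda$. $\mathbb{P}_\lambda(1\in\lambda_{>a,<b})$ is the probability that, for $\sigma$ uniform on $\{\sigma\in\mathfrak{S}_n: des(\sigma)=D_\lambda\}$ ($des(\sigma)=\{i:\sigma(i+1)<\sigma(i)\}$), the position $\sigma^{-1}(1)$ of the letter $1$ satisfies $a<\sigma^{-1}(1)<b$. *)

theory Defs
  imports Complex_Main "HOL-Combinatorics.Permutations"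
begin

definition des :: "nat \<Rightarrow> (nat \<Rightarrow> nat) \<Rightarrow> nat set" where
  "des n \<sigma> = {i \<in> {1..<n}. \<sigma> (Suc i) < \<sigma> i}"

definition perms_des :: "nat \<Rightarrow> nat set \<Rightarrow> (nat \<Rightarrow> nat) set" where
  "perms_des n D = {\<sigma>. \<sigma> permutes {1..n} \<and> des n \<sigma> = D}"

text \<open>Composition of n encoded by its descent set D, a subset of [1,n-1].\<close>
definition is_composition_des :: "nat \<Rightarrow> nat set \<Rightarrow> bool" where
  "is_composition_des n D \<longleftrightarrow> D \<subseteq> {1..n-1}"

definition is_peak :: "nat \<Rightarrow> nat set \<Rightarrow> nat \<Rightarrow> bool" where
  "is_peak n D i \<longleftrightarrow> i \<in> {1..n} \<and> i \<in> D \<union> {n} \<and> i - 1 \<notin> D"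

definition prob_one_between :: "nat \<Rightarrow> nat set \<Rightarrow> nat \<Rightarrow> nat \<Rightarrow> real" where
  "prob_one_between n D a b =
     real (card {\<sigma> \<in> perms_des n D. a < inv \<sigma> 1 \<and> inv \<sigma> 1 < b}) / real (card (perms_des n D))"

end

theory Submission
  imports Defs
begin

definition stp :: "nat set \<Rightarrow> nat \<Rightarrow> (nat \<Rightarrow> nat) \<Rightarrow> (nat \<Rightarrow> nat)" where
  "stp Bk t x = (if Suc t \<notin> x ` Bk then transpose t (Suc t) \<circ> x else x)"

fun G :: "nat set \<Rightarrow> nat \<Rightarrow> (nat \<Rightarrow> nat) \<Rightarrow> (nat \<Rightarrow> nat)" where
  "G Bk 0 x = x"
| "G Bk (Suc m) x = stp Bk (Suc m) (G Bk m x)"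

lemma transpose_img: "(transpose t (Suc t) \<circ> x) ` B = transpose t (Suc t) ` (x ` B)"
  by (simp add: image_comp)

lemma mem_transpose_img:
  "u \<in> transpose t (Suc t) ` S \<longleftrightarrow> transpose t (Suc t) u \<in> S"
proof -
  have invol: "\<And>w. transpose t (Suc t) (transpose t (Suc t) w) = w" by (simp add: transpose_def)
  show ?thesis by (metis image_iff invol)
qed

lemma stp_inv: "t \<in> x ` Bk \<Longrightarrow> Suc t \<in> stp Bk t x ` Bk"
  unfolding stp_def using mem_transpose_img[of "Suc t" t "x ` Bk"]
  by (auto simp: transpose_img)

lemma stp_inj:
  assumes "t \<in> x ` Bk" "t \<in> y ` Bk" "stp Bk t x = stp Bk t y"
  shows "x = y"
proof -
  let ?tau = "transpose t (Suc t)"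
  have inv: "?tau \<circ> (?tau \<circ> z) = z" for z
    by (auto simp: fun_eq_iff)
  show ?thesis
  proof (cases "Suc t \<in> x ` Bk")
    case True
    show ?thesis
    proof (cases "Suc t \<in> y ` Bk")
      case True
      then show ?thesis using assms \<open>Suc t \<in> x ` Bk\<close> by (simp add: stp_def)
    next
      case False
      then have "x = ?tau \<circ> y" using assms \<open>Suc t \<in> x ` Bk\<close> by (simp add: stp_def)
      then have "t \<in> ?tau ` (y ` Bk)" using assms(1) by (simp add: image_image)
      then have "Suc t \<in> y ` Bk" using mem_transpose_img by auto
      then show ?thesis using False by simp
    qed
  next
    case False
    show ?thesis
    proof (cases "Suc t \<in> y ` Bk")
      case True
      then have "y = ?tau \<circ> x" using assms False by (simp add: stp_def)
      then have "t \<in> ?tau ` (x ` Bk)" using assms(2) by (simp add: image_image)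
      then have "Suc t \<in> x ` Bk" using mem_transpose_img by auto
      then show ?thesis using False by simp
    next
      case False2: False
      then have "?tau \<circ> x = ?tau \<circ> y" using assms False by (simp add: stp_def)
      then have "?tau \<circ> (?tau \<circ> x) = ?tau \<circ> (?tau \<circ> y)" by simp
      then show ?thesis using inv by metis
    qed
  qed
qed

lemma G_inv: "1 \<in> x ` Bk \<Longrightarrow> Suc m \<in> G Bk m x ` Bk"
  by (induction m) (auto intro: stp_inv)

lemma G_inj: "inj_on (G Bk m) {x. 1 \<in> x ` Bk}"
proof (induction m)
  case 0
  then show ?case by (simp add: inj_on_def)
next
  case (Suc m)
  show ?case
  proof (rule inj_onI)
    fix x y assume x: "x \<in> {x. 1 \<in> x ` Bk}" and y: "y \<in> {x. 1 \<in> x ` Bk}"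
      and e: "G Bk (Suc m) x = G Bk (Suc m) y"
    have "G Bk m x = G Bk m y"
      using stp_inj[of "Suc m" "G Bk m x" Bk "G Bk m y"] G_inv[of x Bk m] G_inv[of y Bk m] x y e
      by simp
    then show "x = y" using Suc.IH x y by (auto simp: inj_on_def)
  qed
qed

lemma transpose_order:
  assumes "\<not> (u = t \<and> v = Suc t)" "\<not> (u = Suc t \<and> v = t)"
  shows "(transpose t (Suc t) u < transpose t (Suc t) v) \<longleftrightarrow> u < v"
  using assms by (auto simp: transpose_def)

lemma stp_pres:
  assumes y: "y \<in> perms_des n D"
    and tB: "t \<in> y ` {a..b}" and tn: "Suc t \<le> n" and t1: "1 \<le> t"
    and a1: "1 \<le> a" and bn: "b \<le> n"
    and pa: "a - 1 \<notin> D" and pb: "b \<in> D \<union> {n}"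
  shows "stp {a..b} t y \<in> perms_des n D"
proof (cases "Suc t \<in> y ` {a..b}")
  case True
  then show ?thesis using y by (simp add: stp_def)
next
  case False
  let ?tau = "transpose t (Suc t)"
  have perm: "y permutes {1..n}" and dD: "des n y = D" using y by (auto simp: perms_des_def)
  have injy: "inj_on y {1..n}" using permutes_inj_on[OF perm] .
  have sub: "{a..b} \<subseteq> {1..n}" using a1 bn by auto
  have "?tau \<circ> y permutes {1..n}"
    by (rule permutes_compose[OF perm permutes_swap_id]) (use tn t1 in auto)
  moreover have "des n (?tau \<circ> y) = des n y"
  proof -
    have "(?tau (y (Suc i)) < ?tau (y i)) \<longleftrightarrow> (y (Suc i) < y i)" if i: "i \<in> {1..<n}" for i
    proof (rule transpose_order)
      show "\<not> (y (Suc i) = t \<and> y i = Suc t)"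
      proof
        assume h: "y (Suc i) = t \<and> y i = Suc t"
        obtain p where p: "p \<in> {a..b}" "y p = t" using tB by auto
        have "Suc i \<in> {1..n}" "p \<in> {1..n}" using i p sub by auto
        then have "Suc i = p" using inj_onD[OF injy, of "Suc i" p] h p(2) by simp
        moreover have "i \<notin> {a..b}"
        proof
          assume "i \<in> {a..b}"
          then have "y i \<in> y ` {a..b}" by (rule imageI)
          then show False using h False by simp
        qed
        ultimately have "i = a - 1" using p by auto
        moreover have "i \<in> des n y" using h i by (simp add: des_def)
        ultimately show False using dD pa by simp
      qed
      show "\<not> (y (Suc i) = Suc t \<and> y i = t)"
      proof
        assume h: "y (Suc i) = Suc t \<and> y i = t"
        obtain p where p: "p \<in> {a..b}" "y p = t" using tB by auto
        have "i \<in> {1..n}" "p \<in> {1..n}" using i p sub by auto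
        then have "i = p" using inj_onD[OF injy, of i p] h p(2) by simp
        moreover have "Suc i \<notin> {a..b}"
        proof
          assume "Suc i \<in> {a..b}"
          then have "y (Suc i) \<in> y ` {a..b}" by (rule imageI)
          then show False using h False by simp
        qed
        ultimately have "i = b" using p by auto
        then have "b \<in> D" using pb i by auto
        then have "y (Suc i) < y i" using dD \<open>i = b\<close> by (auto simp: des_def)
        then show False using h by simp
      qed
    qed
    then show ?thesis by (auto simp: des_def)
  qed
  ultimately show ?thesis using False dD by (simp add: stp_def perms_des_def)
qed

lemma G_pres:
  assumes "x \<in> perms_des n D" "1 \<in> x ` {a..b}" "Suc m \<le> n"
    and "1 \<le> a" "b \<le> n" "a - 1 \<notin> D" "b \<in> D \<union> {n}"
  shows "G {a..b} m x \<in> perms_des n D"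
  using assms(3)
proof (induction m)
  case 0
  then show ?case using assms by simp
next
  case (Suc m)
  have "G {a..b} m x \<in> perms_des n D" using Suc by simp
  moreover have "Suc m \<in> G {a..b} m x ` {a..b}" using G_inv assms(2) by blast
  ultimately have "stp {a..b} (Suc m) (G {a..b} m x) \<in> perms_des n D"
    using stp_pres[of "G {a..b} m x" n D "Suc m" a b] assms(4-7) Suc.prems by simp
  then show ?case by simp
qed

theorem lemma22:
  fixes n :: nat and D :: "nat set" and a b :: nat
  assumes "is_composition_des n D"
    and "is_peak n D a" and "is_peak n D b" and "a < b"
  shows "prob_one_between n D a b \<le> 2 * real (b - a) / real n"
proof -
  define P where "P = perms_des n D"
  define A where "A = {\<sigma> \<in> P. a < inv \<sigma> 1 \<and> inv \<sigma> 1 < b}"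
  define Bk where "Bk = {a..b}"
  have a1: "1 \<le> a" and bn: "b \<le> n" and pa: "a - 1 \<notin> D" and pb: "b \<in> D \<union> {n}"
    using assms(2,3) by (auto simp: is_peak_def)
  have n1: "1 \<le> n" using a1 bn assms(4) by simp
  have finP: "finite P"
    by (rule finite_subset[OF _ finite_permutations[of "{1..n}"]]) (auto simp: P_def perms_des_def)
  have AP: "A \<subseteq> P" by (auto simp: A_def)
  have finA: "finite A" using finP AP finite_subset by blast
  have A1: "1 \<in> \<sigma> ` Bk" if "\<sigma> \<in> A" for \<sigma>
  proof -
    have perm: "\<sigma> permutes {1..n}" using that by (auto simp: A_def P_def perms_des_def)
    have "\<sigma> (inv \<sigma> 1) = 1" using permutes_inverses(1)[OF perm] .
    moreover have "inv \<sigma> 1 \<in> Bk" using that by (auto simp: A_def Bk_def)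
    ultimately show ?thesis by force
  qed
  define Pm where "Pm m = {y \<in> P. Suc m \<in> y ` Bk}" for m
  have cardA: "card A \<le> card (Pm m)" if m: "m < n" for m
  proof (rule card_inj_on_le[of "G Bk m"])
    show "inj_on (G Bk m) A"
      by (rule inj_on_subset[OF G_inj]) (use A1 in auto)
    show "G Bk m ` A \<subseteq> Pm m"
    proof
      fix y assume "y \<in> G Bk m ` A"
      then obtain x where x: "x \<in> A" "y = G Bk m x" by auto
      have "y \<in> P" unfolding x(2) P_def Bk_def
        using G_pres[of x n D a b m] x(1) A1[OF x(1)] m a1 bn pa pb AP
        by (auto simp: P_def Bk_def)
      moreover have "Suc m \<in> y ` Bk" using G_inv[OF A1[OF x(1)]] x(2) by simp
      ultimately show "y \<in> Pm m" by (simp add: Pm_def)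
    qed
    show "finite (Pm m)" using finP by (simp add: Pm_def)
  qed
  have "n * card A = (\<Sum>m<n. card A)" by simp
  also have "\<dots> \<le> (\<Sum>m<n. card (Pm m))" by (rule sum_mono) (use cardA in auto)
  also have "\<dots> = (\<Sum>m<n. \<Sum>y\<in>P. if Suc m \<in> y ` Bk then 1 else 0)"
  proof (rule sum.cong[OF refl])
    fix m
    show "card (Pm m) = (\<Sum>y\<in>P. if Suc m \<in> y ` Bk then 1 else 0)"
      using finP by (simp add: Pm_def sum.If_cases Int_def)
  qed
  also have "\<dots> = (\<Sum>y\<in>P. \<Sum>m<n. if Suc m \<in> y ` Bk then 1 else 0)"
    by (rule sum.swap)
  also have "\<dots> = (\<Sum>y\<in>P. card {m \<in> {..<n}. Suc m \<in> y ` Bk})"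
    by (simp add: sum.If_cases Int_def)
  also have "\<dots> \<le> (\<Sum>y\<in>P. Suc b - a)"
  proof (rule sum_mono)
    fix y assume "y \<in> P"
    have "card {m \<in> {..<n}. Suc m \<in> y ` Bk} \<le> card (y ` Bk)"
      by (rule card_inj_on_le[of Suc]) (auto simp: Bk_def)
    also have "\<dots> \<le> card Bk" by (rule card_image_le) (simp add: Bk_def)
    finally show "card {m \<in> {..<n}. Suc m \<in> y ` Bk} \<le> Suc b - a" by (simp add: Bk_def)
  qed
  also have "\<dots> = (Suc b - a) * card P" by simp
  finally have key: "n * card A \<le> (Suc b - a) * card P" .
  have key': "real n * real (card A) \<le> (real (b - a) + 1) * real (card P)"
  proof -
    have "real (n * card A) \<le> real ((Suc b - a) * card P)" using key by linarith
    moreover have "real (Suc b - a) = real (b - a) + 1" using assms(4) by simp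
    ultimately show ?thesis by (simp only: of_nat_mult)
  qed
  have prob: "prob_one_between n D a b = real (card A) / real (card P)"
    by (simp add: prob_one_between_def A_def P_def)
  have k1: "1 \<le> real (b - a)" using assms(4) by simp
  have npos: "0 < real n" using n1 by simp
  show ?thesis
  proof (cases "card P = 0")
    case True
    then show ?thesis using prob by simp
  next
    case False
    then have Ppos: "0 < real (card P)" by simp
    have "real (card A) / real (card P) \<le> (real (b - a) + 1) / real n"
      using key' Ppos npos by (simp add: divide_simps mult.commute)
    also have "\<dots> \<le> 2 * real (b - a) / real n"
      using k1 npos by (simp add: divide_right_mono)
    finally show ?thesis using prob by simp
  qed
qed

end
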